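(* Let $n\ge 4$ and $k\ge 3$ be integers. Let $C_n=\{0,1,\dots,n-1\}$ be the $n$-element chain with the usual order, and let $C_2=\{0,1\}$. Let $K=C_n\times\dots\times C_n\times C_2$ be the direct product of $k$ copies of $C_n$ followed by one copy of $C_2$. Define $$e=(0,\dots,0,1,0),\qquad f=(n-2,\dots,n-2,n-1,0)\in K,$$ where the entry $1$ of $e$ and the entry $n-1$ of $f$ are in coordinate $k$. Let $L(n,k)=K\setminus[e,f]$ with the order inherited from $K$. Then $L(n,k)$ is an upper semimodular lattice with $2n^k-(n-1)^k$ elements and breadth $k$, and $L(n,k)$ fails to satisfy the $c_1$-median property.
   Context: $[e,f]=\{x\in K: e\le x\le f\}$, with the componentwise order on $K$. A lattice is upper semimodular if for all $x,y$, $x\wedge y\prec x$ implies $y\prec x\vee y$, where $\prec$ is the covering relation. The breadth of a lattice $L$ is the least positive integer $n$ such that every join of $m\ge n$ elements equals the join of some $n$ of those elements. For a lattice $L$ of finite length, $d(x,y)$ is the length of a shortest path between $x$ and $y$ in the undirected covering graph of $L$. For $\xi=(x_1,\dots,x_k)\in L^k$, an element $y\in L$ is a median of $\xi$ if $\sum_{i} d(y,x_i)$ is minimum over $L$. The lattice $L$ satisfies the $c_1$-median property if every median $y$ of every profile $\xi$ satisfies $y\le x_1\vee\dots\vee x_k$. *)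

theory Defs
  imports Main
begin

definition is_lub_on :: "'a::order set \<Rightarrow> 'a set \<Rightarrow> 'a \<Rightarrow> bool" where
  "is_lub_on S X z \<longleftrightarrow> z \<in> S \<and> (\<forall>x\<in>X. x \<le> z) \<and> (\<forall>w\<in>S. (\<forall>x\<in>X. x \<le> w) \<longrightarrow> z \<le> w)"

definition is_glb_on :: "'a::order set \<Rightarrow> 'a set \<Rightarrow> 'a \<Rightarrow> bool" where
  "is_glb_on S X z \<longleftrightarrow> z \<in> S \<and> (\<forall>x\<in>X. z \<le> x) \<and> (\<forall>w\<in>S. (\<forall>x\<in>X. w \<le> x) \<longrightarrow> w \<le> z)"

definition lattice_on :: "'a::order set \<Rightarrow> bool" where
  "lattice_on S \<longleftrightarrow> S \<noteq> {} \<and>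
     (\<forall>x\<in>S. \<forall>y\<in>S. (\<exists>z. is_lub_on S {x, y} z) \<and> (\<exists>z. is_glb_on S {x, y} z))"

definition join_set_on :: "'a::order set \<Rightarrow> 'a set \<Rightarrow> 'a" where
  "join_set_on S X = (THE z. is_lub_on S X z)"

definition join_on :: "'a::order set \<Rightarrow> 'a \<Rightarrow> 'a \<Rightarrow> 'a" where
  "join_on S x y = join_set_on S {x, y}"

definition meet_on :: "'a::order set \<Rightarrow> 'a \<Rightarrow> 'a \<Rightarrow> 'a" where
  "meet_on S x y = (THE z. is_glb_on S {x, y} z)"

definition covers_on :: "'a::order set \<Rightarrow> 'a \<Rightarrow> 'a \<Rightarrow> bool" where
  "covers_on S x y \<longleftrightarrow> x \<in> S \<and> y \<in> S \<and> x < y \<and> \<not> (\<exists>z\<in>S. x < z \<and> z < y)"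

definition upper_semimodular_on :: "'a::order set \<Rightarrow> bool" where
  "upper_semimodular_on S \<longleftrightarrow>
     (\<forall>x\<in>S. \<forall>y\<in>S. covers_on S (meet_on S x y) x \<longrightarrow> covers_on S y (join_on S x y))"

definition breadth_le :: "'a::order set \<Rightarrow> nat \<Rightarrow> bool" where
  "breadth_le S n \<longleftrightarrow>
     (\<forall>X. X \<subseteq> S \<and> finite X \<and> card X \<ge> n \<longrightarrow>
        (\<exists>Y\<subseteq>X. card Y = n \<and> join_set_on S Y = join_set_on S X))"

definition breadth :: "'a::order set \<Rightarrow> nat" where
  "breadth S = (LEAST n. 0 < n \<and> breadth_le S n)"

definition cover_graph :: "'a::order set \<Rightarrow> ('a \<times> 'a) set" where
  "cover_graph S = {(x, y). covers_on S x y \<or> covers_on S y x}"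

definition cdist :: "'a::order set \<Rightarrow> 'a \<Rightarrow> 'a \<Rightarrow> nat" where
  "cdist S x y = (LEAST m. (x, y) \<in> cover_graph S ^^ m)"

definition is_median :: "'a::order set \<Rightarrow> 'a list \<Rightarrow> 'a \<Rightarrow> bool" where
  "is_median S xs y \<longleftrightarrow> y \<in> S \<and>
     (\<forall>z\<in>S. (\<Sum>x\<leftarrow>xs. cdist S y x) \<le> (\<Sum>x\<leftarrow>xs. cdist S z x))"

definition c1_median_property :: "'a::order set \<Rightarrow> bool" where
  "c1_median_property S \<longleftrightarrow>
     (\<forall>xs y. xs \<noteq> [] \<and> set xs \<subseteq> S \<and> is_median S xs y \<longrightarrow> y \<le> join_set_on S (set xs))"

text \<open>The product K = C_n^k x C_2, elements as functions nat => nat: coordinates 0..k-1 range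
  over C_n, coordinate k over C_2, all other coordinates are 0. Order is componentwise.\<close>
definition Kprod :: "nat \<Rightarrow> nat \<Rightarrow> (nat \<Rightarrow> nat) set" where
  "Kprod n k = {x. (\<forall>i<k. x i < n) \<and> x k < 2 \<and> (\<forall>i>k. x i = 0)}"

definition e_elem :: "nat \<Rightarrow> nat \<Rightarrow> (nat \<Rightarrow> nat)" where
  "e_elem n k = (\<lambda>i. if i = k - 1 then 1 else 0)"

definition f_elem :: "nat \<Rightarrow> nat \<Rightarrow> (nat \<Rightarrow> nat)" where
  "f_elem n k = (\<lambda>i. if i < k - 1 then n - 2 else if i = k - 1 then n - 1 else 0)"

definition Llat :: "nat \<Rightarrow> nat \<Rightarrow> (nat \<Rightarrow> nat) set" where
  "Llat n k = Kprod n k - {x \<in> Kprod n k. e_elem n k \<le> x \<and> x \<le> f_elem n k}"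

end

theory Submission
  imports Defs "HOL-Library.FuncSet"
begin

locale LK = fixes n k :: nat assumes n4: "n \<ge> 4" and k3: "k \<ge> 3"
begin

lemma e_le: "e_elem n k \<le> x \<longleftrightarrow> x (k-1) \<noteq> 0"
  by (auto simp: le_fun_def e_elem_def)

lemma le_f: assumes "x \<in> Kprod n k"
  shows "x \<le> f_elem n k \<longleftrightarrow> x k = 0 \<and> (\<forall>i<k-1. x i \<noteq> n-1)"
proof
  assume h: "x \<le> f_elem n k"
  have "x k \<le> f_elem n k k" using h by (simp add: le_fun_def)
  moreover have "f_elem n k k = 0" using k3 by (simp add: f_elem_def)
  moreover have "x i \<noteq> n - 1" if "i < k-1" for i
  proof -
    have "x i \<le> f_elem n k i" using h by (simp add: le_fun_def)
    then show ?thesis using that n4 by (simp add: f_elem_def)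
  qed
  ultimately show "x k = 0 \<and> (\<forall>i<k-1. x i \<noteq> n-1)" by auto
next
  assume h: "x k = 0 \<and> (\<forall>i<k-1. x i \<noteq> n-1)"
  show "x \<le> f_elem n k" unfolding le_fun_def
  proof
    fix i
    consider "i < k-1" | "i = k-1" | "i = k" | "i > k" using k3 by linarith
    then show "x i \<le> f_elem n k i"
    proof cases
      case 1 then have "x i < n" using assms by (auto simp: Kprod_def)
      then show ?thesis using 1 h by (auto simp: f_elem_def)
    next
      case 2 then have "x i < n" using assms k3 by (auto simp: Kprod_def)
      then show ?thesis using 2 by (auto simp: f_elem_def)
    next
      case 3 then show ?thesis using h by simp
    next
      case 4 then show ?thesis using assms by (auto simp: Kprod_def)
    qed
  qed
qed

lemma L_iff: "x \<in> Llat n k \<longleftrightarrow> x \<in> Kprod n k \<and> (x (k-1) = 0 \<or> x k \<noteq> 0 \<or> (\<exists>i<k-1. x i = n-1))"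
  unfolding Llat_def using le_f e_le by auto

lemma K_bound: "x \<in> Kprod n k \<Longrightarrow> i < k \<Longrightarrow> x i < n"
  by (auto simp: Kprod_def)
lemma K_boundk: "x \<in> Kprod n k \<Longrightarrow> x k < 2"
  by (auto simp: Kprod_def)
lemma K_zero: "x \<in> Kprod n k \<Longrightarrow> i > k \<Longrightarrow> x i = 0"
  by (auto simp: Kprod_def)

lemma sup_K: "x \<in> Kprod n k \<Longrightarrow> y \<in> Kprod n k \<Longrightarrow> sup x y \<in> Kprod n k"
  by (auto simp: Kprod_def sup_max)
lemma inf_K: "x \<in> Kprod n k \<Longrightarrow> y \<in> Kprod n k \<Longrightarrow> inf x y \<in> Kprod n k"
  by (auto simp: Kprod_def inf_min min_def)

lemma sup_L: assumes "x \<in> Llat n k" "y \<in> Llat n k" shows "sup x y \<in> Llat n k"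
proof -
  have xK: "x \<in> Kprod n k" and yK: "y \<in> Kprod n k" using assms L_iff by auto
  show ?thesis unfolding L_iff
  proof (intro conjI)
    show "sup x y \<in> Kprod n k" using sup_K xK yK .
    show "sup x y (k - 1) = 0 \<or> sup x y k \<noteq> 0 \<or> (\<exists>i<k - 1. sup x y i = n - 1)"
    proof (cases "\<exists>i<k - 1. x i = n - 1 \<or> y i = n - 1")
      case True
      then obtain i where i: "i < k-1" "x i = n - 1 \<or> y i = n - 1" by auto
      have "x i < n" "y i < n" using xK yK i K_bound by auto
      then have "sup x y i = n - 1" using i by (auto simp: sup_max)
      then show ?thesis using i by auto
    next
      case False
      then show ?thesis using assms L_iff by (auto simp: sup_max)
    qed
  qed
qed

lemma zero_L: "(\<lambda>_. 0) \<in> Llat n k"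
  using n4 by (auto simp: L_iff Kprod_def)

definition glbL :: "(nat \<Rightarrow> nat) \<Rightarrow> (nat \<Rightarrow> nat) \<Rightarrow> (nat \<Rightarrow> nat)" where
  "glbL x y = (if inf x y \<in> Llat n k then inf x y else (inf x y)(k-1 := 0))"

lemma glbL: assumes "x \<in> Llat n k" "y \<in> Llat n k" shows "is_glb_on (Llat n k) {x, y} (glbL x y)"
proof -
  have xK: "x \<in> Kprod n k" and yK: "y \<in> Kprod n k" using assms L_iff by auto
  define p where "p = inf x y"
  have pK: "p \<in> Kprod n k" using inf_K xK yK p_def by simp
  show ?thesis
  proof (cases "p \<in> Llat n k")
    case True
    then show ?thesis using assms unfolding is_glb_on_def glbL_def p_def by auto
  next
    case False
    have q: "(glbL x y) = p(k-1 := 0)" using False unfolding glbL_def p_def by simp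
    have qK: "p(k-1 := 0) \<in> Kprod n k" using pK n4 by (auto simp: Kprod_def)
    have qL: "p(k-1 := 0) \<in> Llat n k" using qK by (simp add: L_iff)
    have qle: "p(k-1 := 0) \<le> p" by (simp add: le_fun_def)
    have pprop: "p (k-1) \<noteq> 0" "p k = 0" "\<forall>i<k-1. p i \<noteq> n-1" using False pK L_iff by auto
    have great: "w \<le> p(k-1 := 0)" if "w \<in> Llat n k" "w \<le> p" for w
    proof -
      have wK: "w \<in> Kprod n k" using that L_iff by auto
      have "w k = 0" using that(2) pprop by (metis le_funD le_zero_eq)
      moreover have "w i \<noteq> n - 1" if "i < k-1" for i
      proof -
        have "p i < n" using pK K_bound that by auto
        then have "p i < n - 1" using pprop that by auto
        then show ?thesis using \<open>w \<le> p\<close> by (metis le_funD not_le)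
      qed
      ultimately have "w (k-1) = 0" using that(1) L_iff by auto
      then show ?thesis using that(2) by (auto simp: le_fun_def)
    qed
    show ?thesis unfolding is_glb_on_def q using qL qle great p_def
      by (auto intro: order_trans)
  qed
qed

lemma lub_sup: assumes "x \<in> Llat n k" "y \<in> Llat n k" shows "is_lub_on (Llat n k) {x, y} (sup x y)"
  using assms sup_L unfolding is_lub_on_def by auto

lemma lattice_L: "lattice_on (Llat n k)"
  unfolding lattice_on_def using zero_L lub_sup glbL by blast

end

lemma lub_unique: assumes "is_lub_on S X z" shows "join_set_on S X = z"
  unfolding join_set_on_def
proof (rule the_equality)
  show "is_lub_on S X z" by fact
  fix w assume "is_lub_on S X w"
  with assms show "w = z" unfolding is_lub_on_def by (meson order.antisym)
qed

lemma glb_unique: assumes "is_glb_on S {x, y} z" shows "meet_on S x y = z"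
  unfolding meet_on_def
proof (rule the_equality)
  show "is_glb_on S {x, y} z" by fact
  fix w assume "is_glb_on S {x, y} w"
  with assms show "w = z" unfolding is_glb_on_def by (meson order.antisym)
qed

lemma no_between:
  fixes a z :: "nat \<Rightarrow> nat"
  assumes "a \<le> z" "z \<le> a(j := Suc (a j))"
  shows "z = a \<or> z = a(j := Suc (a j))"
proof -
  have o: "z i = a i" if "i \<noteq> j" for i
    using assms that by (metis fun_upd_other le_funD order.antisym)
  have "z j = a j \<or> z j = Suc (a j)"
    using assms le_funD[OF assms(1), of j] le_funD[OF assms(2), of j] by auto
  then show ?thesis using o by (metis fun_upd_other fun_upd_same ext)
qed

context LK begin

lemma join_eq: "x \<in> Llat n k \<Longrightarrow> y \<in> Llat n k \<Longrightarrow> join_on (Llat n k) x y = sup x y"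
  unfolding join_on_def using lub_sup lub_unique by blast

lemma meet_glb: "x \<in> Llat n k \<Longrightarrow> y \<in> Llat n k \<Longrightarrow> is_glb_on (Llat n k) {x, y} (meet_on (Llat n k) x y)"
  using glbL glb_unique by metis

lemma step:
  assumes aL: "a \<in> Llat n k" and bL: "b \<in> Llat n k" and ab: "a \<le> b" "a \<noteq> b"
  shows "\<exists>j\<le>k. a j < b j \<and> a(j := Suc (a j)) \<in> Llat n k"
proof -
  have aK: "a \<in> Kprod n k" and bK: "b \<in> Kprod n k" using aL bL L_iff by auto
  obtain i where "a i \<noteq> b i" using ab by (auto simp: fun_eq_iff)
  then have ilt: "a i < b i" using ab(1) by (metis le_funD order_less_le)
  have ik: "i \<le> k" using ilt K_zero[OF aK] K_zero[OF bK] by (metis not_le less_irrefl)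
  have upK: "a(j := Suc (a j)) \<in> Kprod n k" if "j \<le> k" "a j < b j" for j
  proof -
    have "j < k \<Longrightarrow> b j < n" using K_bound bK by auto
    moreover have "j = k \<Longrightarrow> b j < 2" using K_boundk bK by auto
    ultimately show ?thesis using aK that unfolding Kprod_def by auto
  qed
  have bk: "b k < 2" using K_boundk bK .
  consider "a k < b k" | "a k \<noteq> 0" | "\<exists>i<k-1. a i = n-1" | "\<not> a k < b k" "a k = 0" "\<forall>i<k-1. a i \<noteq> n-1"
    by blast
  then show ?thesis
  proof cases
    case 1
    then show ?thesis using upK[of k] by (auto simp: L_iff)
  next
    case 2
    then show ?thesis using upK[OF ik ilt] ik ilt by (auto simp: L_iff)
  next
    case 3
    then obtain i' where i': "i' < k-1" "a i' = n-1" by auto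
    have "b i' < n" using K_bound bK i' by auto
    then have "i \<noteq> i'" using ilt i' by auto
    then have "(a(i := Suc (a i))) i' = n - 1" using i' by simp
    then have "a(i := Suc (a i)) \<in> Llat n k" unfolding L_iff using upK[OF ik ilt] i' by blast
    then show ?thesis using ik ilt by blast
  next
    case 4
    have a0: "a (k-1) = 0" using 4 aL L_iff by auto
    have bk0: "b k = 0" using 4 by auto
    show ?thesis
    proof (cases "\<exists>j\<le>k. j \<noteq> k-1 \<and> a j < b j")
      case True
      then obtain j where j: "j \<le> k" "j \<noteq> k-1" "a j < b j" by auto
      then show ?thesis using upK[OF j(1) j(3)] a0 by (auto simp: L_iff)
    next
      case False
      have eq: "b j = a j" if "j \<noteq> k-1" for j
      proof (cases "j \<le> k")
        case True then show ?thesis using False that ab(1) by (metis le_funD order_less_le)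
      next
        case False then show ?thesis using K_zero[OF aK, of j] K_zero[OF bK, of j] by simp
      qed
      have "b (k-1) = 0 \<or> b k \<noteq> 0 \<or> (\<exists>i<k-1. b i = n-1)" using bL L_iff by auto
      moreover have "b (k-1) \<noteq> 0"
      proof
        assume "b (k-1) = 0"
        then have "b = a" using eq a0 by (metis fun_eq_iff)
        then show False using ab by simp
      qed
      ultimately show ?thesis using bk0 eq 4 by auto
    qed
  qed
qed

lemma covers_step:
  assumes "covers_on (Llat n k) a b"
  shows "\<exists>j\<le>k. b = a(j := Suc (a j))"
proof -
  have aL: "a \<in> Llat n k" and bL: "b \<in> Llat n k" and ab: "a < b" using assms covers_on_def by auto
  obtain j where j: "j \<le> k" "a j < b j" "a(j := Suc (a j)) \<in> Llat n k"
    using step[OF aL bL] ab by (metis order_less_imp_le order_less_irrefl)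
  have "a \<le> b" using ab by simp
  then have cb: "a(j := Suc (a j)) \<le> b" using j by (auto simp: le_fun_def)
  have ac: "a < a(j := Suc (a j))"
    by (auto simp: less_fun_def le_fun_def fun_eq_iff intro!: exI[of _ j])
  have "a(j := Suc (a j)) = b"
  proof (rule ccontr)
    assume "a(j := Suc (a j)) \<noteq> b"
    then have "a(j := Suc (a j)) < b" using cb by auto
    then show False using assms ac j(3) unfolding covers_on_def by blast
  qed
  then show ?thesis using j by auto
qed

lemma covers_up:
  assumes "a \<in> Llat n k" "a(j := Suc (a j)) \<in> Llat n k"
  shows "covers_on (Llat n k) a (a(j := Suc (a j)))"
proof -
  have ac: "a < a(j := Suc (a j))"
    by (auto simp: less_fun_def le_fun_def fun_eq_iff intro!: exI[of _ j])
  show ?thesis unfolding covers_on_def using assms ac no_between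
    by (metis order_less_imp_le order_less_irrefl)
qed

lemma semimod: "upper_semimodular_on (Llat n k)"
  unfolding upper_semimodular_on_def
proof (intro ballI impI)
  fix x y assume xL: "x \<in> Llat n k" and yL: "y \<in> Llat n k"
    and cov: "covers_on (Llat n k) (meet_on (Llat n k) x y) x"
  define m where "m = meet_on (Llat n k) x y"
  have g: "is_glb_on (Llat n k) {x, y} m" using meet_glb xL yL m_def by simp
  have mL: "m \<in> Llat n k" and mx: "m \<le> x" and my: "m \<le> y"
    and gr: "\<And>w. w \<in> Llat n k \<Longrightarrow> w \<le> x \<Longrightarrow> w \<le> y \<Longrightarrow> w \<le> m"
    using g unfolding is_glb_on_def by auto
  obtain j where j: "j \<le> k" "x = m(j := Suc (m j))" using covers_step cov m_def by blast
  have mlt: "m < x" using cov m_def covers_on_def by auto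
  have yj: "y j = m j"
  proof (rule ccontr)
    assume "y j \<noteq> m j"
    then have "Suc (m j) \<le> y j" using my le_funD[OF my, of j] by auto
    then have "x \<le> y" using j my by (auto simp: le_fun_def)
    then have "x \<le> m" using gr xL by auto
    then show False using mlt by auto
  qed
  have s: "sup x y = y(j := Suc (y j))"
    using j yj my by (auto simp: fun_eq_iff sup_max le_fun_def max_def)
  have "sup x y \<in> Llat n k" using sup_L xL yL .
  then show "covers_on (Llat n k) y (join_on (Llat n k) x y)"
    using join_eq[OF xL yL] s covers_up yL by simp
qed

end

lemma card_box:
  fixes A :: "nat \<Rightarrow> nat set" and k :: nat
  shows "card {x::nat\<Rightarrow>nat. (\<forall>i\<le>k. x i \<in> A i) \<and> (\<forall>i>k. x i = 0)} = (\<Prod>i\<le>k. card (A i))"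
proof -
  define g where "g = (\<lambda>(y::nat\<Rightarrow>nat) i. if i \<le> k then y i else 0)"
  have img: "{x::nat\<Rightarrow>nat. (\<forall>i\<le>k. x i \<in> A i) \<and> (\<forall>i>k. x i = 0)} = g ` (PiE {..k} A)"
  proof (intro equalityI subsetI)
    fix x assume x: "x \<in> {x::nat\<Rightarrow>nat. (\<forall>i\<le>k. x i \<in> A i) \<and> (\<forall>i>k. x i = 0)}"
    have "x = g (restrict x {..k})" using x by (auto simp: g_def fun_eq_iff)
    moreover have "restrict x {..k} \<in> PiE {..k} A" using x by auto
    ultimately show "x \<in> g ` (PiE {..k} A)" by blast
  next
    fix x assume "x \<in> g ` (PiE {..k} A)"
    then show "x \<in> {x::nat\<Rightarrow>nat. (\<forall>i\<le>k. x i \<in> A i) \<and> (\<forall>i>k. x i = 0)}"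
      by (auto simp: g_def PiE_def Pi_def)
  qed
  have inj: "inj_on g (PiE {..k} A)"
  proof (rule inj_onI)
    fix y1 y2 assume y: "y1 \<in> PiE {..k} A" "y2 \<in> PiE {..k} A" "g y1 = g y2"
    show "y1 = y2"
    proof (rule PiE_ext[OF y(1) y(2)])
      fix i assume "i \<in> {..k}"
      then show "y1 i = y2 i" using fun_cong[OF y(3), of i] by (simp add: g_def)
    qed
  qed
  show ?thesis unfolding img using card_image[OF inj] card_PiE[of "{..k}" A] by simp
qed

context LK begin

lemma card_K: "card (Kprod n k) = 2 * n ^ k"
proof -
  have "Kprod n k = {x::nat\<Rightarrow>nat. (\<forall>i\<le>k. x i \<in> (if i < k then {..<n} else {..<2})) \<and> (\<forall>i>k. x i = 0)}"
    by (auto simp: Kprod_def)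
  then have "card (Kprod n k) = (\<Prod>i\<le>k. card (if i < k then {..<n} else {..<2::nat}))"
    using card_box by simp
  also have "\<dots> = (\<Prod>i<k. card (if i < k then {..<n} else {..<2::nat})) * 2"
    by (simp add: lessThan_Suc_atMost[symmetric])
  also have "(\<Prod>i<k. card (if i < k then {..<n} else {..<2::nat})) = (\<Prod>i<k. n)"
    by (rule prod.cong) auto
  finally show ?thesis by simp
qed

lemma card_I: "card {x \<in> Kprod n k. e_elem n k \<le> x \<and> x \<le> f_elem n k} = (n - 1) ^ k"
proof -
  define m where "m = k - 2"
  have m: "k = Suc (Suc m)" using k3 m_def by arith
  define A where "A = (\<lambda>i::nat. if i < k-1 then {..n-2} else if i = k-1 then {1..n-1} else {0::nat})"
  have "{x \<in> Kprod n k. e_elem n k \<le> x \<and> x \<le> f_elem n k}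
      = {x::nat\<Rightarrow>nat. (\<forall>i\<le>k. x i \<in> A i) \<and> (\<forall>i>k. x i = 0)}"
  proof (intro equalityI subsetI)
    fix x assume x: "x \<in> {x \<in> Kprod n k. e_elem n k \<le> x \<and> x \<le> f_elem n k}"
    then have xK: "x \<in> Kprod n k" and ex: "x (k-1) \<noteq> 0" and fx: "x k = 0" "\<forall>i<k-1. x i \<noteq> n-1"
      using e_le le_f by auto
    have "x i \<in> A i" if ik: "i \<le> k" for i
    proof -
      consider "i < k-1" | "i = k-1" | "i = k" using ik by linarith
      then show ?thesis
      proof cases
        case 1
        then have "x i < n" "x i \<noteq> n - 1" using fx K_bound[OF xK, of i] by auto
        then show ?thesis using 1 by (auto simp: A_def)
      next
        case 2 then show ?thesis using ex K_bound[OF xK, of i] k3 by (auto simp: A_def)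
      next
        case 3 then show ?thesis using fx k3 by (auto simp: A_def)
      qed
    qed
    then show "x \<in> {x::nat\<Rightarrow>nat. (\<forall>i\<le>k. x i \<in> A i) \<and> (\<forall>i>k. x i = 0)}"
      using K_zero[OF xK] by auto
  next
    fix x assume x: "x \<in> {x::nat\<Rightarrow>nat. (\<forall>i\<le>k. x i \<in> A i) \<and> (\<forall>i>k. x i = 0)}"
    have a: "x i \<in> A i" if "i \<le> k" for i using x that by auto
    have xK: "x \<in> Kprod n k"
      unfolding Kprod_def
    proof (intro CollectI conjI allI impI)
      fix i assume "i < k"
      then show "x i < n" using a[of i] n4 by (auto simp: A_def split: if_splits)
    next
      have "k \<noteq> k - 1" "\<not> k < k - 1" using k3 by auto
      then show "x k < 2" using a[of k] by (auto simp: A_def)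
    next
      fix i assume "i > k" then show "x i = 0" using x by auto
    qed
    have "x (k-1) \<noteq> 0" using a[of "k-1"] by (auto simp: A_def)
    moreover have "k \<noteq> k - 1" "\<not> k < k - 1" using k3 by auto
    moreover have "x k = 0" using a[of k] calculation(2,3) by (auto simp: A_def)
    moreover have "\<forall>i<k-1. x i \<noteq> n-1"
    proof (intro allI impI)
      fix i assume "i < k - 1"
      then have "x i \<le> n - 2" using a[of i] by (auto simp: A_def)
      then show "x i \<noteq> n - 1" using n4 by auto
    qed
    ultimately show "x \<in> {x \<in> Kprod n k. e_elem n k \<le> x \<and> x \<le> f_elem n k}"
      using xK e_le le_f by auto
  qed
  then have "card {x \<in> Kprod n k. e_elem n k \<le> x \<and> x \<le> f_elem n k} = (\<Prod>i\<le>k. card (A i))"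
    using card_box by simp
  also have "\<dots> = (\<Prod>i<Suc (Suc (Suc m)). card (A i))" using m by (simp add: lessThan_Suc_atMost[symmetric] del: prod.lessThan_Suc)
  also have "\<dots> = (\<Prod>i<m. card (A i)) * card (A m) * card (A (Suc m)) * card (A (Suc (Suc m)))"
    by (simp add: mult.assoc)
  also have "(\<Prod>i<m. card (A i)) = (\<Prod>i<m. n - 1)"
    by (rule prod.cong) (use m n4 in \<open>auto simp: A_def\<close>)
  also have "card (A m) = n - 1" using m n4 by (simp add: A_def)
  also have "card (A (Suc m)) = n - 1" using m n4 by (simp add: A_def)
  also have "card (A (Suc (Suc m))) = 1" using m by (simp add: A_def)
  finally show ?thesis using m by simp
qed

lemma card_L: "card (Llat n k) = 2 * n ^ k - (n - 1) ^ k"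
proof -
  have "card (Kprod n k) > 0" using card_K n4 by simp
  then have fin: "finite (Kprod n k)" by (rule card_ge_0_finite)
  have "card (Llat n k) = card (Kprod n k) - card {x \<in> Kprod n k. e_elem n k \<le> x \<and> x \<le> f_elem n k}"
    unfolding Llat_def by (rule card_Diff_subset) (use fin in auto)
  then show ?thesis using card_K card_I by simp
qed

end

lemma Sup_fin_wit:
  fixes X :: "(nat \<Rightarrow> nat) set"
  assumes "finite X" "X \<noteq> {}"
  shows "\<exists>x\<in>X. x i = Sup_fin X i"
  using assms
proof (induction X rule: finite_ne_induct)
  case (singleton x) then show ?case by simp
next
  case (insert x F)
  then obtain y where "y \<in> F" "y i = Sup_fin F i" by auto
  then show ?case using insert by (auto simp: sup_max max_def)
qed

context LK begin

lemma Sup_fin_L: assumes "finite X" "X \<noteq> {}" "X \<subseteq> Llat n k" shows "Sup_fin X \<in> Llat n k"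
  using assms
proof (induction X rule: finite_ne_induct)
  case (singleton x) then show ?case by simp
next
  case (insert x F)
  have "Sup_fin (insert x F) = sup x (Sup_fin F)" using Sup_fin.insert[OF insert.hyps(1,2)] .
  moreover have "x \<in> Llat n k" "Sup_fin F \<in> Llat n k" using insert by auto
  ultimately show ?case using sup_L[of x "Sup_fin F"] by (simp only:)
qed

lemma join_Sup_fin: assumes "finite X" "X \<noteq> {}" "X \<subseteq> Llat n k"
  shows "join_set_on (Llat n k) X = Sup_fin X"
proof (rule lub_unique)
  show "is_lub_on (Llat n k) X (Sup_fin X)"
    unfolding is_lub_on_def using Sup_fin_L[OF assms] assms
    by (auto intro: Sup_fin.coboundedI Sup_fin.boundedI)
qed

definition uv :: "nat \<Rightarrow> nat \<Rightarrow> nat" where "uv i = (\<lambda>j. if j = i then 1 else 0)"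

lemma breadth_k: "breadth_le (Llat n k) k"
  unfolding breadth_le_def
proof (intro allI impI)
  fix X assume "X \<subseteq> Llat n k \<and> finite X \<and> k \<le> card X"
  then have XL: "X \<subseteq> Llat n k" and fin: "finite X" and cX: "k \<le> card X" by auto
  have ne: "X \<noteq> {}" using cX k3 by auto
  define s where "s = Sup_fin X"
  have sL: "s \<in> Llat n k" using Sup_fin_L[OF fin ne XL] s_def by simp
  then have sK: "s \<in> Kprod n k" using L_iff by auto
  have le_s: "x \<le> s" if "x \<in> X" for x using that fin s_def by (auto intro: Sup_fin.coboundedI)
  have wit: "\<exists>x\<in>X. x i = s i" for i using Sup_fin_wit[OF fin ne] s_def by simp
  have key: "\<exists>x\<in>X. \<exists>j j'. j \<le> k \<and> j' \<le> k \<and> j \<noteq> j' \<and> x j = s j \<and> x j' = s j'"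
  proof -
    obtain w where w: "w \<in> X" "w (k-1) = s (k-1)" using wit by blast
    have wL: "w \<in> Llat n k" using w XL by auto
    then have wK: "w \<in> Kprod n k" using L_iff by auto
    consider "s (k-1) = 0" | "w k \<noteq> 0" | "s (k-1) \<noteq> 0" "w k = 0" by blast
    then show ?thesis
    proof cases
      case 1
      obtain w0 where w0: "w0 \<in> X" "w0 0 = s 0" using wit by blast
      have "w0 (k-1) \<le> s (k-1)" using le_s[OF w0(1)] by (simp add: le_fun_def)
      then have "w0 (k-1) = s (k-1)" using 1 by simp
      moreover have "(0::nat) \<noteq> k - 1" "0 \<le> k" "k - 1 \<le> k" using k3 by auto
      ultimately show ?thesis using w0 by blast
    next
      case 2
      have "w k \<le> s k" using le_s[OF w(1)] by (simp add: le_fun_def)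
      moreover have "s k < 2" using K_boundk sK .
      ultimately have "w k = s k" using 2 by simp
      moreover have "k - 1 \<noteq> k" "k - 1 \<le> k" using k3 by auto
      ultimately show ?thesis using w by blast
    next
      case 3
      then obtain i where i: "i < k - 1" "w i = n - 1" using wL L_iff w by auto
      have "w i \<le> s i" using le_s[OF w(1)] by (simp add: le_fun_def)
      moreover have "s i < n" using K_bound[OF sK, of i] i by simp
      ultimately have "w i = s i" using i by simp
      moreover have "k - 1 \<noteq> i" "k - 1 \<le> k" "i \<le> k" using i by auto
      ultimately show ?thesis using w by blast
    qed
  qed
  then obtain x j j' where x: "x \<in> X" "j \<le> k" "j' \<le> k" "j \<noteq> j'" "x j = s j" "x j' = s j'" by blast
  define wt where "wt i = (SOME y. y \<in> X \<and> y i = s i)" for i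
  have wt: "wt i \<in> X \<and> wt i i = s i" for i
    unfolding wt_def using wit[of i] by (metis (mono_tags, lifting) someI_ex)
  define W where "W = insert x (wt ` ({..k} - {j, j'}))"
  have WX: "W \<subseteq> X" using x wt W_def by auto
  have finW: "finite W" using W_def by simp
  have "card ({..k} - {j, j'}) = Suc k - 2" using x by (subst card_Diff_subset) auto
  then have "card (wt ` ({..k} - {j, j'})) \<le> Suc k - 2" by (metis card_image_le finite_Diff finite_atMost)
  moreover have "card W \<le> Suc (card (wt ` ({..k} - {j, j'})))" unfolding W_def by (simp add: card_insert_if)
  ultimately have cW: "card W \<le> k" using k3 by linarith
  have Wwit: "\<exists>y\<in>W. y i = s i" if "i \<le> k" for i
  proof (cases "i = j \<or> i = j'")
    case True then show ?thesis using x W_def by auto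
  next
    case False then have "wt i \<in> W" using that W_def by auto
    then show ?thesis using wt by blast
  qed
  have "card (X - W) = card X - card W" using WX fin by (simp add: card_Diff_subset finite_subset)
  then have "k - card W \<le> card (X - W)" using cX by simp
  then obtain Z where Z: "Z \<subseteq> X - W" "card Z = k - card W" by (metis obtain_subset_with_card_n)
  define Y where "Y = W \<union> Z"
  have finZ: "finite Z" using Z fin by (meson finite_Diff finite_subset)
  have cY: "card Y = k" unfolding Y_def using Z cW finW finZ
    by (subst card_Un_disjoint) auto
  have YX: "Y \<subseteq> X" using Y_def Z WX by auto
  have finY: "finite Y" using finW finZ Y_def by simp
  have neY: "Y \<noteq> {}" using Y_def W_def by simp
  have "Sup_fin Y = s"
  proof (rule order.antisym)
    show "Sup_fin Y \<le> s" by (rule Sup_fin.boundedI[OF finY neY]) (use YX le_s in auto)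
    show "s \<le> Sup_fin Y" unfolding le_fun_def
    proof
      fix i show "s i \<le> Sup_fin Y i"
      proof (cases "i \<le> k")
        case True
        then obtain y where "y \<in> W" "y i = s i" using Wwit by blast
        then have "y \<le> Sup_fin Y" using finY Y_def by (auto intro: Sup_fin.coboundedI)
        then show ?thesis using \<open>y i = s i\<close> by (metis le_funD)
      next
        case False then show ?thesis using K_zero[OF sK, of i] by simp
      qed
    qed
  qed
  then have "join_set_on (Llat n k) Y = join_set_on (Llat n k) X"
    using join_Sup_fin[OF finY neY] join_Sup_fin[OF fin ne XL] YX XL s_def by auto
  then show "\<exists>Y\<subseteq>X. card Y = k \<and> join_set_on (Llat n k) Y = join_set_on (Llat n k) X"
    using YX cY by blast
qed

lemma not_breadth: assumes "0 < m" "m < k" shows "\<not> breadth_le (Llat n k) m"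
proof
  assume b: "breadth_le (Llat n k) m"
  define I where "I = {..<k-1} \<union> {k}"
  define X where "X = uv ` I"
  have inj: "inj uv" unfolding uv_def inj_def by (metis fun_eq_iff zero_neq_one)
  have finI: "finite I" using I_def by simp
  have "card I = k" unfolding I_def using k3 by (subst card_Un_disjoint) auto
  then have cX: "card X = k" unfolding X_def using inj by (simp add: card_image inj_on_subset)
  have finX: "finite X" using finI X_def by simp
  have uvL: "uv i \<in> Llat n k" if "i \<in> I" for i
  proof -
    have "i \<noteq> k - 1" using that I_def k3 by auto
    moreover have "uv i \<in> Kprod n k" using that I_def n4 by (auto simp: Kprod_def uv_def)
    ultimately show ?thesis unfolding L_iff by (simp add: uv_def)
  qed
  have XL: "X \<subseteq> Llat n k" using uvL X_def by auto
  obtain Y where Y: "Y \<subseteq> X" "card Y = m" "join_set_on (Llat n k) Y = join_set_on (Llat n k) X"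
    using b XL finX cX assms unfolding breadth_le_def by (metis order_less_imp_le)
  have finY: "finite Y" using Y finX finite_subset by auto
  have neY: "Y \<noteq> {}" using Y assms by auto
  have neX: "X \<noteq> {}" using neY Y by auto
  have "Y \<noteq> X" using Y cX assms by auto
  then obtain i where i: "i \<in> I" "uv i \<notin> Y" using Y X_def by blast
  have eq: "Sup_fin Y = Sup_fin X"
    using Y join_Sup_fin[OF finY neY] join_Sup_fin[OF finX neX XL] XL by auto
  obtain y where y: "y \<in> Y" "y i = Sup_fin Y i" using Sup_fin_wit[OF finY neY] by blast
  then obtain i' where "i' \<in> I" "y = uv i'" using Y X_def by blast
  then have "i' \<noteq> i" using i y by auto
  then have "Sup_fin Y i = 0" using y \<open>y = uv i'\<close> by (simp add: uv_def)
  moreover have "uv i \<le> Sup_fin X" using finX X_def i by (auto intro: Sup_fin.coboundedI)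
  then have "1 \<le> Sup_fin X i" by (metis le_funD uv_def)
  ultimately show False using eq by simp
qed

lemma breadth_L: "breadth (Llat n k) = k"
  unfolding breadth_def
proof (rule Least_equality)
  show "0 < k \<and> breadth_le (Llat n k) k" using breadth_k k3 by simp
  fix y assume "0 < y \<and> breadth_le (Llat n k) y"
  then show "k \<le> y" using not_breadth by (meson not_le)
qed

end

lemma sum_two:
  fixes g :: "nat \<Rightarrow> nat"
  assumes "finite A" "a \<in> A" "b \<in> A" "a \<noteq> b" "\<And>i. i \<in> A \<Longrightarrow> i \<noteq> a \<Longrightarrow> i \<noteq> b \<Longrightarrow> g i = 0"
  shows "sum g A = g a + g b"
proof -
  have "sum g A = sum g {a, b} + sum g (A - {a, b})"
    using sum.subset_diff[of "{a, b}" A g] assms by simp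
  moreover have "sum g (A - {a, b}) = 0" using assms by (auto intro: sum.neutral)
  ultimately show ?thesis using assms by simp
qed

lemma sum_ge4:
  fixes G :: "nat \<Rightarrow> nat"
  assumes "finite A" "a \<in> A" "b \<in> A" "c \<in> A" "d \<in> A"
    "a \<noteq> b" "a \<noteq> c" "a \<noteq> d" "b \<noteq> c" "b \<noteq> d" "c \<noteq> d"
  shows "G a + G b + G c + G d \<le> sum G A"
proof -
  have "sum G {a, b, c, d} \<le> sum G A" using assms by (intro sum_mono2) auto
  moreover have "sum G {a, b, c, d} = G a + G b + G c + G d" using assms by simp
  ultimately show ?thesis by simp
qed

lemma nat_tri: "((a::nat) - c) + (c - a) \<le> ((a - b) + (b - a)) + ((b - c) + (c - b))" by linarith
lemma nat_maxd: "(max (x::nat) z - x) + (max x z - z) = (x - z) + (z - x)" by (simp add: max_def)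

context LK begin

definition d1 :: "(nat \<Rightarrow> nat) \<Rightarrow> (nat \<Rightarrow> nat) \<Rightarrow> nat" where
  "d1 x z = (\<Sum>i\<le>k. (x i - z i) + (z i - x i))"

abbreviation "R \<equiv> cover_graph (Llat n k)"

lemma covers_R: "covers_on (Llat n k) a b \<Longrightarrow> (a, b) \<in> R \<and> (b, a) \<in> R"
  by (simp add: cover_graph_def)

lemma path_up:
  "\<And>a. a \<in> Llat n k \<Longrightarrow> b \<in> Llat n k \<Longrightarrow> a \<le> b \<Longrightarrow> D = (\<Sum>i\<le>k. b i - a i) \<Longrightarrow>
   (a, b) \<in> R ^^ D \<and> (b, a) \<in> R ^^ D"
proof (induction D)
  case 0
  have "\<forall>i\<in>{..k}. b i - a i = 0" using 0 by simp
  then have "b i = a i" if "i \<le> k" for i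
  proof -
    have "b i \<le> a i" using that \<open>\<forall>i\<in>{..k}. b i - a i = 0\<close> by simp
    then show ?thesis using le_funD[OF 0(3), of i] by simp
  qed
  moreover have "b i = a i" if "\<not> i \<le> k" for i
  proof -
    have aK: "a \<in> Kprod n k" and bK: "b \<in> Kprod n k" using 0 L_iff by auto
    have "k < i" using that by simp
    then show ?thesis using K_zero[OF aK \<open>k < i\<close>] K_zero[OF bK \<open>k < i\<close>] by simp
  qed
  ultimately have "a = b" by (metis ext)
  then show ?case by simp
next
  case (Suc D)
  have "a \<noteq> b" using Suc.prems by auto
  then obtain j where j: "j \<le> k" "a j < b j" "a(j := Suc (a j)) \<in> Llat n k"
    using step Suc.prems by blast
  define c where "c = a(j := Suc (a j))"
  have cL: "c \<in> Llat n k" using j c_def by simp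
  have cb: "c \<le> b" using Suc.prems j c_def by (auto simp: le_fun_def)
  have s1: "(\<Sum>i\<le>k. b i - a i) = (b j - a j) + (\<Sum>i\<in>{..k} - {j}. b i - a i)"
    using j by (simp add: sum.remove)
  have s2: "(\<Sum>i\<le>k. b i - c i) = (b j - c j) + (\<Sum>i\<in>{..k} - {j}. b i - c i)"
    using j by (simp add: sum.remove)
  have s3: "(\<Sum>i\<in>{..k} - {j}. b i - c i) = (\<Sum>i\<in>{..k} - {j}. b i - a i)"
    by (rule sum.cong) (auto simp: c_def)
  have "D = (\<Sum>i\<le>k. b i - c i)" using s1 s2 s3 Suc.prems j c_def by simp
  then have IH: "(c, b) \<in> R ^^ D \<and> (b, c) \<in> R ^^ D" using Suc.IH cL Suc.prems cb by blast
  have "(a, c) \<in> R \<and> (c, a) \<in> R" using covers_up[of a j] Suc.prems j c_def covers_R by simp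
  then show ?case using IH by (meson relpow_Suc_I relpow_Suc_I2)
qed

lemma conn: assumes "x \<in> Llat n k" "z \<in> Llat n k" shows "(x, z) \<in> R ^^ d1 x z"
proof -
  define u where "u = sup x z"
  have uL: "u \<in> Llat n k" using sup_L assms u_def by simp
  have "(x, u) \<in> R ^^ (\<Sum>i\<le>k. u i - x i)" using path_up[OF assms(1) uL] u_def by simp
  moreover have "(u, z) \<in> R ^^ (\<Sum>i\<le>k. u i - z i)" using path_up[OF assms(2) uL] u_def by simp
  ultimately have "(x, z) \<in> R ^^ (\<Sum>i\<le>k. u i - x i) O R ^^ (\<Sum>i\<le>k. u i - z i)"
    by (rule relcompI)
  then have "(x, z) \<in> R ^^ ((\<Sum>i\<le>k. u i - x i) + (\<Sum>i\<le>k. u i - z i))"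
    by (simp only: relpow_add)
  moreover have "(\<Sum>i\<le>k. u i - x i) + (\<Sum>i\<le>k. u i - z i) = d1 x z"
    unfolding d1_def sum.distrib[symmetric] by (rule sum.cong) (simp_all add: u_def sup_max nat_maxd)
  ultimately show ?thesis by simp
qed

lemma d1_tri: "d1 x z \<le> d1 x y + d1 y z"
  unfolding d1_def sum.distrib[symmetric] by (rule sum_mono) (rule nat_tri)

lemma d1_sym: "d1 x z = d1 z x"
  unfolding d1_def by (rule sum.cong) (simp_all add: add.commute)

lemma d1_step: "j \<le> k \<Longrightarrow> d1 y (y(j := Suc (y j))) = 1"
proof -
  assume j: "j \<le> k"
  have "d1 y (y(j := Suc (y j))) = (\<Sum>i\<le>k. if i = j then 1 else 0)"
    unfolding d1_def by (rule sum.cong) auto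
  then show ?thesis using j by simp
qed

lemma lower: "(x, z) \<in> R ^^ m \<Longrightarrow> d1 x z \<le> m"
proof (induction m arbitrary: z)
  case 0 then show ?case by (simp add: d1_def)
next
  case (Suc m)
  then obtain y where y: "(x, y) \<in> R ^^ m" "(y, z) \<in> R" by auto
  have "d1 y z \<le> 1"
  proof -
    from y(2) have "covers_on (Llat n k) y z \<or> covers_on (Llat n k) z y" by (simp add: cover_graph_def)
    then show ?thesis
    proof
      assume "covers_on (Llat n k) y z"
      then obtain j where "j \<le> k" "z = y(j := Suc (y j))" using covers_step by blast
      then show ?thesis using d1_step by simp
    next
      assume "covers_on (Llat n k) z y"
      then obtain j where "j \<le> k" "y = z(j := Suc (z j))" using covers_step by blast
      then show ?thesis using d1_step d1_sym by simp
    qed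
  qed
  then show ?case using Suc.IH[OF y(1)] d1_tri[of x z y] by simp
qed

lemma cdist_le: "x \<in> Llat n k \<Longrightarrow> z \<in> Llat n k \<Longrightarrow> cdist (Llat n k) x z \<le> d1 x z"
  unfolding cdist_def using conn by (rule Least_le)

lemma cdist_ge: assumes "x \<in> Llat n k" "z \<in> Llat n k" shows "d1 x z \<le> cdist (Llat n k) x z"
proof -
  have "(x, z) \<in> R ^^ cdist (Llat n k) x z"
    unfolding cdist_def using conn[OF assms] by (rule LeastI)
  then show ?thesis using lower by blast
qed

definition "x1 = (\<lambda>i. if i = 0 \<or> i = k - 1 then n - 1 else 0)"
definition "x2 = (\<lambda>i. if i = 1 \<or> i = k - 1 then n - 1 else 0)"
definition "x3 = (\<lambda>i::nat. 0::nat)"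
definition "yy = (\<lambda>i. if i = k - 1 then n - 1 else if i = k then 1 else 0)"

lemma kfacts: "0 < k - 1" "1 < k - 1" "k - 1 \<noteq> k" "k - 1 < k" "(0::nat) \<noteq> k" "(1::nat) \<noteq> k"
  using k3 by auto

lemma x1L: "x1 \<in> Llat n k"
proof -
  have "x1 \<in> Kprod n k" using kfacts n4 by (auto simp: Kprod_def x1_def)
  moreover have "x1 0 = n - 1" by (simp add: x1_def)
  ultimately show ?thesis unfolding L_iff using kfacts by blast
qed

lemma x2L: "x2 \<in> Llat n k"
proof -
  have "x2 \<in> Kprod n k" using kfacts n4 by (auto simp: Kprod_def x2_def)
  moreover have "x2 1 = n - 1" by (simp add: x2_def)
  ultimately show ?thesis unfolding L_iff using kfacts by blast
qed

lemma x3L: "x3 \<in> Llat n k" using zero_L x3_def by simp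

lemma yyL: "yy \<in> Llat n k"
proof -
  have "yy \<in> Kprod n k" using kfacts n4 by (auto simp: Kprod_def yy_def)
  moreover have "yy k \<noteq> 0" using kfacts by (simp add: yy_def)
  ultimately show ?thesis unfolding L_iff by blast
qed

lemma d1_y: "d1 yy x1 = n" "d1 yy x2 = n" "d1 yy x3 = n"
proof -
  have "d1 yy x1 = (\<lambda>i. (yy i - x1 i) + (x1 i - yy i)) 0 + (\<lambda>i. (yy i - x1 i) + (x1 i - yy i)) k"
    unfolding d1_def by (rule sum_two) (use kfacts in \<open>auto simp: yy_def x1_def\<close>)
  then show "d1 yy x1 = n" using kfacts n4 by (simp add: yy_def x1_def)
  have "d1 yy x2 = (\<lambda>i. (yy i - x2 i) + (x2 i - yy i)) 1 + (\<lambda>i. (yy i - x2 i) + (x2 i - yy i)) k"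
    unfolding d1_def by (rule sum_two) (use kfacts in \<open>auto simp: yy_def x2_def\<close>)
  then show "d1 yy x2 = n" using kfacts n4 by (simp add: yy_def x2_def)
  have "d1 yy x3 = (\<lambda>i. (yy i - x3 i) + (x3 i - yy i)) (k-1) + (\<lambda>i. (yy i - x3 i) + (x3 i - yy i)) k"
    unfolding d1_def by (rule sum_two) (use kfacts in \<open>auto simp: yy_def x3_def\<close>)
  then show "d1 yy x3 = n" using kfacts n4 by (simp add: yy_def x3_def)
qed

lemma d1_z: assumes zL: "z \<in> Llat n k" shows "3 * n \<le> d1 z x1 + d1 z x2 + d1 z x3"
proof -
  define G where "G i = ((z i - x1 i) + (x1 i - z i)) + ((z i - x2 i) + (x2 i - z i)) + ((z i - x3 i) + (x3 i - z i))" for i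
  have sumG: "d1 z x1 + d1 z x2 + d1 z x3 = sum G {..k}"
    unfolding d1_def G_def by (simp add: sum.distrib)
  have zK: "z \<in> Kprod n k" using zL L_iff by auto
  have b0: "z 0 < n" "z 1 < n" "z (k-1) < n" "z k < 2" using K_bound[OF zK] K_boundk[OF zK] kfacts by auto
  have G0: "G 0 = (n - 1 - z 0) + 2 * z 0" using b0 kfacts by (simp add: G_def x1_def x2_def x3_def)
  have G1: "G 1 = (n - 1 - z 1) + 2 * z 1" using b0 kfacts by (simp add: G_def x1_def x2_def x3_def)
  have Gc: "G (k-1) = 2 * (n - 1 - z (k-1)) + z (k-1)" using b0 kfacts by (simp add: G_def x1_def x2_def x3_def)
  have Gk: "G k = 3 * z k" using kfacts by (simp add: G_def x1_def x2_def x3_def)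
  have Gj: "G j = 3 * z j" if "j \<noteq> 0" "j \<noteq> 1" "j \<noteq> k - 1" for j
    using that by (simp add: G_def x1_def x2_def x3_def)
  have four: "G 0 + G 1 + G (k-1) + G k \<le> sum G {..k}"
    by (rule sum_ge4) (use kfacts in auto)
  have "z (k-1) = 0 \<or> z k \<noteq> 0 \<or> (\<exists>i<k-1. z i = n-1)" using zL L_iff by auto
  then consider "z (k-1) = 0" | "z k \<noteq> 0" | "z 0 = n - 1" | "z 1 = n - 1" | j where "j < k - 1" "j \<noteq> 0" "j \<noteq> 1" "z j = n - 1"
  proof (elim disjE exE conjE)
    fix i assume "i < k - 1" "z i = n - 1"
    then show thesis using that by (cases "i = 0"; cases "i = 1") auto
  qed (use that in auto)
  then have "3 * n \<le> sum G {..k}"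
  proof cases
    case 1 then show ?thesis using four G0 G1 Gc Gk n4 by linarith
  next
    case 2 then show ?thesis using four G0 G1 Gc Gk n4 b0 by linarith
  next
    case 3 then show ?thesis using four G0 G1 Gc Gk n4 b0 by linarith
  next
    case 4 then show ?thesis using four G0 G1 Gc Gk n4 b0 by linarith
  next
    case 5
    have "G 0 + G 1 + G (k-1) + G j \<le> sum G {..k}"
      by (rule sum_ge4) (use kfacts 5 in auto)
    then show ?thesis using G0 G1 Gc Gj[OF 5(2,3)] 5 n4 b0 by linarith
  qed
  then show ?thesis using sumG by simp
qed

lemma not_c1: "\<not> c1_median_property (Llat n k)"
proof -
  define xs where "xs = [x1, x2, x3]"
  have setL: "set xs \<subseteq> Llat n k" using x1L x2L x3L xs_def by simp
  have med: "is_median (Llat n k) xs yy"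
    unfolding is_median_def
  proof (intro conjI ballI)
    show "yy \<in> Llat n k" by (rule yyL)
    fix z assume zL: "z \<in> Llat n k"
    have "(\<Sum>x\<leftarrow>xs. cdist (Llat n k) yy x) \<le> d1 yy x1 + d1 yy x2 + d1 yy x3"
      using cdist_le[OF yyL x1L] cdist_le[OF yyL x2L] cdist_le[OF yyL x3L] xs_def by simp
    also have "\<dots> \<le> d1 z x1 + d1 z x2 + d1 z x3" using d1_y d1_z[OF zL] by simp
    also have "\<dots> \<le> (\<Sum>x\<leftarrow>xs. cdist (Llat n k) z x)"
      using cdist_ge[OF zL x1L] cdist_ge[OF zL x2L] cdist_ge[OF zL x3L] xs_def by simp
    finally show "(\<Sum>x\<leftarrow>xs. cdist (Llat n k) yy x) \<le> (\<Sum>x\<leftarrow>xs. cdist (Llat n k) z x)" .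
  qed
  have fin: "finite (set xs)" and ne: "set xs \<noteq> {}" using xs_def by auto
  have j: "join_set_on (Llat n k) (set xs) = Sup_fin (set xs)" using join_Sup_fin[OF fin ne setL] .
  obtain x where "x \<in> set xs" "x k = Sup_fin (set xs) k" using Sup_fin_wit[OF fin ne] by blast
  moreover have "x k = 0" if "x \<in> set xs" for x using that xs_def kfacts by (auto simp: x1_def x2_def x3_def)
  ultimately have "join_set_on (Llat n k) (set xs) k = 0" using j by metis
  moreover have "yy k = 1" using kfacts by (simp add: yy_def)
  ultimately have nle: "\<not> yy \<le> join_set_on (Llat n k) (set xs)" by (metis le_funD le_zero_eq one_neq_zero)
  have "xs \<noteq> []" by (simp add: xs_def)
  then show ?thesis unfolding c1_median_property_def using med setL nle by blast
qed

end

theorem lemma2p3: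
  fixes n k :: nat
  assumes "n \<ge> 4" and "k \<ge> 3"
  shows "lattice_on (Llat n k) \<and> upper_semimodular_on (Llat n k) \<and>
         card (Llat n k) = 2 * n ^ k - (n - 1) ^ k \<and>
         breadth (Llat n k) = k \<and> \<not> c1_median_property (Llat n k)"
proof -
  interpret LK n k using assms by unfold_locales
  show ?thesis using lattice_L semimod card_L breadth_L not_c1 by blast
qed

end
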